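(* Let $m,n\ge 2$ be integers not divisible by $3$. Every closed toroidal 1-form $f\,dx+g\,dy$ can be written uniquely in the form $r\,dx+s\,dy+\omega$ where $r,s\in\mathbb{F}_3$ (viewed as constant functions) and $\omega$ is an exact toroidal 1-form; that is, there exist unique $r,s\in\mathbb{F}_3$ and a unique exact toroidal 1-form $\omega=u\,dx+w\,dy$ with $f=r+u$ and $g=s+w$.
   Context: A function $h:\mathbb{Z}\times\mathbb{Z}\to\mathbb{F}_3$ is doubly periodic if $h_{i+m,j}=h_{i,j+n}=h_{i,j}$ for all $i,j\in\mathbb{Z}$. Its partial derivatives are $(D_xh)_{i,j}=h_{i+1,j}-h_{i,j}$ and $(D_yh)_{i,j}=h_{i,j+1}-h_{i,j}$ (again doubly periodic). A toroidal 1-form is a formal expression $f\,dx+g\,dy$ with $f,g:\mathbb{Z}\times\mathbb{Z}\to\mathbb{F}_3$ doubly periodic; it is closed if $D_yf=D_xg$, and exact if $f=D_xh$, $g=D_yh$ for some doubly periodic $h:\mathbb{Z}\times\mathbb{Z}\to\mathbb{F}_3$. *)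

theory Defs
  imports Main "HOL-Library.Numeral_Type"
begin

text \<open>The field F_3 is rendered as the library type 3 (integers modulo 3).
  Functions Z x Z to F_3 are curried functions int => int => 3.\<close>

definition doubly_periodic :: "int \<Rightarrow> int \<Rightarrow> (int \<Rightarrow> int \<Rightarrow> 3) \<Rightarrow> bool" where
  "doubly_periodic m n h \<longleftrightarrow> (\<forall>i j. h (i + m) j = h i j \<and> h i (j + n) = h i j)"

definition Dx :: "(int \<Rightarrow> int \<Rightarrow> 3) \<Rightarrow> int \<Rightarrow> int \<Rightarrow> 3" where
  "Dx h = (\<lambda>i j. h (i + 1) j - h i j)"

definition Dy :: "(int \<Rightarrow> int \<Rightarrow> 3) \<Rightarrow> int \<Rightarrow> int \<Rightarrow> 3" where
  "Dy h = (\<lambda>i j. h i (j + 1) - h i j)"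

definition toroidal_form :: "int \<Rightarrow> int \<Rightarrow> (int \<Rightarrow> int \<Rightarrow> 3) \<Rightarrow> (int \<Rightarrow> int \<Rightarrow> 3) \<Rightarrow> bool" where
  "toroidal_form m n f g \<longleftrightarrow> doubly_periodic m n f \<and> doubly_periodic m n g"

definition closed_form :: "(int \<Rightarrow> int \<Rightarrow> 3) \<Rightarrow> (int \<Rightarrow> int \<Rightarrow> 3) \<Rightarrow> bool" where
  "closed_form f g \<longleftrightarrow> Dy f = Dx g"

definition exact_form :: "int \<Rightarrow> int \<Rightarrow> (int \<Rightarrow> int \<Rightarrow> 3) \<Rightarrow> (int \<Rightarrow> int \<Rightarrow> 3) \<Rightarrow> bool" where
  "exact_form m n f g \<longleftrightarrow> (\<exists>h. doubly_periodic m n h \<and> f = Dx h \<and> g = Dy h)"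

end

theory Submission
  imports Defs
begin
lemma inv3: fixes m :: int assumes "\<not> 3 dvd m" shows "(of_int m :: 3) * of_int m = 1"
proof -
  have t: "m mod 3 = 1 \<or> m mod 3 = 2" using assms by presburger
  have "(of_int m :: 3) = of_int (3*(m div 3) + m mod 3)" by simp
  also have "\<dots> = of_int (m mod 3)" proof -
    have z: "(3::3) = 0" by simp
    show ?thesis by (simp only: of_int_add of_int_mult) (simp add: z)
  qed
  finally show ?thesis using t by auto
qed

lemma shift1:
  fixes \<phi> :: "int \<Rightarrow> 'a::comm_ring_1"
  assumes "\<forall>x. \<phi> (x + int p) = \<phi> x"
  shows "(\<Sum>k<p. \<phi> (i + 1 + int k)) = (\<Sum>k<p. \<phi> (i + int k))"
proof -
  have "(\<Sum>k<Suc p. \<phi> (i + int k)) = \<phi> i + (\<Sum>k<p. \<phi> (i + 1 + int k))"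
    by (subst sum.lessThan_Suc_shift) (simp add: ac_simps)
  moreover have "(\<Sum>k<Suc p. \<phi> (i + int k)) = (\<Sum>k<p. \<phi> (i + int k)) + \<phi> i"
    using assms by simp
  ultimately show ?thesis by simp
qed

lemma shiftall:
  fixes \<phi> :: "int \<Rightarrow> 'a::comm_ring_1"
  assumes "\<forall>x. \<phi> (x + int p) = \<phi> x"
  shows "(\<Sum>k<p. \<phi> (i + int k)) = (\<Sum>k<p. \<phi> (int k))"
proof (induct i rule: int_induct[where k=0])
  case base then show ?case by simp
next
  case (step1 i) then show ?case using shift1[OF assms, of i] by simp
next
  case (step2 i) then show ?case using shift1[OF assms, of "i - 1"] by simp
qed

lemma weighted:
  fixes \<phi> :: "int \<Rightarrow> 'a::comm_ring_1"
  assumes per: "\<forall>x. \<phi> (x + int p) = \<phi> x" and c: "of_nat p * c = 1"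
  shows "c * (\<Sum>k<p. of_nat k * \<phi> (i + 1 + int k)) - c * (\<Sum>k<p. of_nat k * \<phi> (i + int k))
         = \<phi> i - c * (\<Sum>k<p. \<phi> (int k))"
proof -
  have e1: "(\<Sum>k<p. of_nat k * \<phi> (i + 1 + int k)) =
      (\<Sum>k<p. of_nat (Suc k) * \<phi> (i + 1 + int k)) - (\<Sum>k<p. \<phi> (i + 1 + int k))"
    by (simp add: sum_subtractf[symmetric] algebra_simps)
  have e2: "(\<Sum>k<Suc p. of_nat k * \<phi> (i + int k)) = (\<Sum>k<p. of_nat (Suc k) * \<phi> (i + 1 + int k))"
    by (subst sum.lessThan_Suc_shift) (simp add: ac_simps)
  have e3: "(\<Sum>k<Suc p. of_nat k * \<phi> (i + int k)) = (\<Sum>k<p. of_nat k * \<phi> (i + int k)) + of_nat p * \<phi> i"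
    using per by simp
  have "(\<Sum>k<p. of_nat k * \<phi> (i + 1 + int k)) - (\<Sum>k<p. of_nat k * \<phi> (i + int k))
      = of_nat p * \<phi> i - (\<Sum>k<p. \<phi> (int k))"
    using e1 e2 e3 shift1[OF per, of i] shiftall[OF per, of i] by simp
  then have "c * ((\<Sum>k<p. of_nat k * \<phi> (i + 1 + int k)) - (\<Sum>k<p. of_nat k * \<phi> (i + int k)))
      = c * (of_nat p * \<phi> i) - c * (\<Sum>k<p. \<phi> (int k))" by (metis right_diff_distrib)
  also have "c * (of_nat p * \<phi> i) = \<phi> i" using c by (simp add: mult.assoc[symmetric] mult.commute)
  finally show ?thesis by (simp add: algebra_simps)
qed

lemma telesc:
  fixes \<phi> :: "int \<Rightarrow> 'a::comm_ring_1"
  assumes per: "\<forall>x. \<phi> (x + int p) = \<phi> x"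
  shows "(\<Sum>k<p. \<phi> (int k + 1) - \<phi> (int k)) = 0"
proof -
  have "(\<Sum>k<p. \<phi> (int (Suc k)) - \<phi> (int k)) = \<phi> (int p) - \<phi> (int 0)"
    by (rule sum_lessThan_telescope)
  then show ?thesis using per[rule_format, of 0] by (simp add: add.commute)
qed

lemma char:
  fixes f g u w :: "int \<Rightarrow> int \<Rightarrow> 3"
  assumes ex: "exact_form m n u w" and fu: "f = (\<lambda>i j. r + u i j)" and gw: "g = (\<lambda>i j. s + w i j)"
    and M: "m = int M" and N: "n = int N" and cm: "of_nat M * cm = 1" and cn: "of_nat N * cn = 1"
  shows "r = cm * (\<Sum>k<M. f (int k) 0) \<and> s = cn * (\<Sum>l<N. g 0 (int l))"
proof -
  obtain h where hp: "doubly_periodic m n h" and u: "u = Dx h" and w: "w = Dy h"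
    using ex unfolding exact_form_def by blast
  have px: "\<forall>x. h (x + int M) 0 = h x 0" and py: "\<forall>x. h 0 (x + int N) = h 0 x"
    using hp M N unfolding doubly_periodic_def by auto
  have "(\<Sum>k<M. f (int k) 0) = (\<Sum>k<M. r + (h (int k + 1) 0 - h (int k) 0))"
    by (simp add: fu u Dx_def)
  also have "\<dots> = of_nat M * r"
    using telesc[OF px] by (simp add: sum.distrib)
  finally have 1: "cm * (\<Sum>k<M. f (int k) 0) = r" using cm
    by (simp add: mult.assoc[symmetric] mult.commute)
  have "(\<Sum>l<N. g 0 (int l)) = (\<Sum>l<N. s + (h 0 (int l + 1) - h 0 (int l)))"
    by (simp add: gw w Dy_def)
  also have "\<dots> = of_nat N * s"
    using telesc[OF py] by (simp add: sum.distrib)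
  finally have 2: "cn * (\<Sum>l<N. g 0 (int l)) = s" using cn
    by (simp add: mult.assoc[symmetric] mult.commute)
  show ?thesis using 1 2 by simp
qed

theorem mainTheorem3:
  fixes m n :: int and f g :: "int \<Rightarrow> int \<Rightarrow> 3"
  assumes "m \<ge> 2" and "n \<ge> 2" and "\<not> 3 dvd m" and "\<not> 3 dvd n"
    and "toroidal_form m n f g" and "closed_form f g"
  shows "\<exists>!(r, s, u, w). exact_form m n u w \<and>
            f = (\<lambda>i j. r + u i j) \<and> g = (\<lambda>i j. s + w i j)"
proof -
  define M where "M = nat m"
  define N where "N = nat n"
  have Mm: "m = int M" and Nn: "n = int N" using assms(1,2) by (auto simp: M_def N_def)
  define cm where "cm = (of_int m :: 3)"
  define cn where "cn = (of_int n :: 3)"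
  have cmi: "of_nat M * cm = 1" using inv3[OF assms(3)] by (simp add: cm_def Mm)
  have cni: "of_nat N * cn = 1" using inv3[OF assms(4)] by (simp add: cn_def Nn)
  have fp: "\<And>i j. f (i + m) j = f i j" "\<And>i j. f i (j + n) = f i j"
    and gp: "\<And>i j. g (i + m) j = g i j" "\<And>i j. g i (j + n) = g i j"
    using assms(5) unfolding toroidal_form_def doubly_periodic_def by auto
  have clo: "\<And>i j. f i (j+1) - f i j = g (i+1) j - g i j"
  proof -
    fix i j
    have "Dy f i j = Dx g i j" using assms(6) unfolding closed_form_def by simp
    then show "f i (j+1) - f i j = g (i+1) j - g i j" by (simp add: Dx_def Dy_def)
  qed
  define R where "R j = cm * (\<Sum>k<M. f (int k) j)" for j
  define G where "G j = cm * (\<Sum>k<M. g (int k) j)" for j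
  define r where "r = R 0"
  define s where "s = cn * (\<Sum>l<N. G (int l))"
  define A where "A i j = cm * (\<Sum>k<M. of_nat k * f (i + int k) j)" for i j
  define B where "B j = cn * (\<Sum>l<N. of_nat l * G (j + int l))" for j
  define h where "h i j = A i j + B j" for i j
  have Rstep: "R (j+1) = R j" for j
  proof -
    have gper: "\<forall>x. g (x + int M) j = g x j" using gp Mm by simp
    have "(\<Sum>k<M. f (int k) (j+1)) - (\<Sum>k<M. f (int k) j) = (\<Sum>k<M. g (int k + 1) j - g (int k) j)"
      by (simp add: sum_subtractf[symmetric] clo)
    also have "\<dots> = 0" by (rule telesc[OF gper])
    finally show ?thesis unfolding R_def by simp
  qed
  have Rc: "R j = r" for j
    unfolding r_def
  proof (induct j rule: int_induct[where k=0])
    case base then show ?case by simp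
  next
    case (step1 i) then show ?case using Rstep[of i] by simp
  next
    case (step2 i) then show ?case using Rstep[of "i - 1"] by simp
  qed
  have DxA: "A (i+1) j - A i j = f i j - r" for i j
  proof -
    have per: "\<forall>x. f (x + int M) j = f x j" using fp Mm by simp
    show ?thesis using weighted[OF per cmi, of i] Rc[of j] unfolding A_def R_def by simp
  qed
  have DyA: "A i (j+1) - A i j = g i j - G j" for i j
  proof -
    have per: "\<forall>x. g (x + int M) j = g x j" using gp Mm by simp
    have "(\<Sum>k<M. of_nat k * f (i + int k) (j+1) - of_nat k * f (i + int k) j)
        = (\<Sum>k<M. of_nat k * g (i + 1 + int k) j - of_nat k * g (i + int k) j)"
    proof (rule sum.cong)
      fix k assume "k \<in> {..<M}"
      have ii: "i + int k + 1 = i + 1 + int k" by simp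
      have e: "f (i + int k) (j+1) - f (i + int k) j = g (i + 1 + int k) j - g (i + int k) j"
        using clo[of "i + int k" j] unfolding ii .
      show "of_nat k * f (i + int k) (j+1) - of_nat k * f (i + int k) j
          = of_nat k * g (i + 1 + int k) j - of_nat k * g (i + int k) j"
        by (simp only: right_diff_distrib[symmetric] e)
    qed simp
    then have "(\<Sum>k<M. of_nat k * f (i + int k) (j+1)) - (\<Sum>k<M. of_nat k * f (i + int k) j)
        = (\<Sum>k<M. of_nat k * g (i + 1 + int k) j) - (\<Sum>k<M. of_nat k * g (i + int k) j)"
      by (simp only: sum_subtractf)
    then have "A i (j+1) - A i j = cm * (\<Sum>k<M. of_nat k * g (i + 1 + int k) j) - cm * (\<Sum>k<M. of_nat k * g (i + int k) j)"
      unfolding A_def by (simp only: right_diff_distrib[symmetric])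
    also have "\<dots> = g i j - G j" using weighted[OF per cmi, of i] unfolding G_def by simp
    finally show ?thesis .
  qed
  have Gp: "\<forall>x. G (x + int N) = G x" using gp Nn by (simp add: G_def)
  have DyB: "B (j+1) - B j = G j - s" for j
    using weighted[OF Gp cni, of j] unfolding B_def s_def by simp
  have hper: "doubly_periodic m n h"
    unfolding doubly_periodic_def
  proof (intro allI conjI)
    fix i j
    have "(\<Sum>k<M. of_nat k * f (i + m + int k) j) = (\<Sum>k<M. of_nat k * f (i + int k) j)"
    proof (rule sum.cong)
      fix k
      have ii: "i + m + int k = (i + int k) + m" by simp
      show "of_nat k * f (i + m + int k) j = of_nat k * f (i + int k) j" by (simp only: ii fp(1))
    qed simp
    then have "A (i + m) j = A i j" unfolding A_def by (simp only:)
    then show "h (i + m) j = h i j" by (simp add: h_def)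
    have "A i (j + n) = A i j" unfolding A_def by (simp add: fp)
    moreover have "(\<Sum>l<N. of_nat l * G (j + n + int l)) = (\<Sum>l<N. of_nat l * G (j + int l))"
    proof (rule sum.cong)
      fix l
      have ii: "j + n + int l = (j + int l) + int N" using Nn by simp
      show "of_nat l * G (j + n + int l) = of_nat l * G (j + int l)" using Gp by (simp only: ii)
    qed simp
    then have "B (j + n) = B j" unfolding B_def by (simp only:)
    ultimately show "h i (j + n) = h i j" by (simp add: h_def)
  qed
  have dxh: "Dx h i j = f i j - r" for i j
  proof -
    have "Dx h i j = A (i+1) j - A i j" unfolding Dx_def h_def by simp
    then show ?thesis using DxA by simp
  qed
  have dyh: "Dy h i j = g i j - s" for i j
  proof -
    have "Dy h i j = (A i (j+1) - A i j) + (B (j+1) - B j)" unfolding Dy_def h_def by (simp add: algebra_simps)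
    then show ?thesis using DyA DyB by simp
  qed
  have P: "exact_form m n (Dx h) (Dy h) \<and> f = (\<lambda>i j. r + Dx h i j) \<and> g = (\<lambda>i j. s + Dy h i j)"
  proof (intro conjI)
    show "exact_form m n (Dx h) (Dy h)" unfolding exact_form_def using hper by blast
    show "f = (\<lambda>i j. r + Dx h i j)" by (simp add: fun_eq_iff dxh)
    show "g = (\<lambda>i j. s + Dy h i j)" by (simp add: fun_eq_iff dyh)
  qed
  show ?thesis
  proof (rule ex1I[where a="(r, s, Dx h, Dy h)"])
    show "case (r, s, Dx h, Dy h) of (r, s, u, w) \<Rightarrow> exact_form m n u w \<and>
            f = (\<lambda>i j. r + u i j) \<and> g = (\<lambda>i j. s + w i j)" using P by simp
  next
    fix y assume y: "case y of (r, s, u, w) \<Rightarrow> exact_form m n u w \<and>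
            f = (\<lambda>i j. r + u i j) \<and> g = (\<lambda>i j. s + w i j)"
    obtain r' s' u' w' where yy: "y = (r', s', u', w')" by (cases y) auto
    have y': "exact_form m n u' w'" "f = (\<lambda>i j. r' + u' i j)" "g = (\<lambda>i j. s' + w' i j)"
      using y yy by auto
    have c1: "r' = r \<and> s' = s"
      using char[OF y' Mm Nn cmi cni] char[OF conjunct1[OF P] conjunct1[OF conjunct2[OF P]] conjunct2[OF conjunct2[OF P]] Mm Nn cmi cni]
      by simp
    have "u' = Dx h" using y'(2) P c1 by (auto simp: fun_eq_iff)
    moreover have "w' = Dy h" using y'(3) P c1 by (auto simp: fun_eq_iff)
    ultimately show "y = (r, s, Dx h, Dy h)" using yy c1 by simp
  qed
qed
end
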